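(* Fix $\nu>1$ and write $F_{\text{exist}}=\nu(\nu+1)$, $F_{\text{2d}}=\nu(\nu+1)/\sqrt{\nu^2+\nu-1}$. For $\mu_L\ge0$, $k,\eta\in\mathbb{R}$, consider the roots $\lambda$ of $\det\big(G(-\infty;\lambda,\eta)-(ik+\mu_L)I\big)=0$ (the $\mu_L$-weighted dispersion relations at $-\infty$). (i) If $F_{\text{2d}}<F<F_{\text{exist}}$, then for every $\mu_L\ge0$ and every $R>0$ there exist $(k,\eta)$ with $k^2+\eta^2\ge R$ and a root $\lambda$ with $\Re\lambda>0$. (ii) If $2<F<F_{\text{2d}}$ and $$\mu_L\in\Big(\tfrac{F^2}{2}-\tfrac{F^2}{F_{\text{exist}}}-\tfrac{F}{F_{\text{2d}}}\sqrt{F_{\text{2d}}^2-F^2},\ \tfrac{F^2}{2}-\tfrac{F^2}{F_{\text{exist}}}+\tfrac{F}{F_{\text{2d}}}\sqrt{F_{\text{2d}}^2-F^2}\Big),$$ then this interval is contained in $(0,\infty)$, and there exists $R>0$ such that for all real $(k,\eta)$ with $k^2+\eta^2\ge R$ every root $\lambda$ satisfies $\Re\lambda<0$.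
   Context: $G(-\infty;\lambda,\eta)=(E-\lambda I-i\eta A_2)A_1^{-1}$ with, at $(H,Q)=(1,1)$ and $s=\frac{\nu^2+\nu+1}{\nu(\nu+1)}$, $A_1=\begin{pmatrix}-s&1&0\\ H/F^2-Q^2/H^2&2Q/H-s&0\\0&0&Q/H-s\end{pmatrix}$, $A_2=\begin{pmatrix}0&0&1\\0&0&Q/H\\ H/F^2&0&0\end{pmatrix}$, $E=\begin{pmatrix}0&0&0\\ 2Q^2/H^3+1&-2Q/H^2&0\\0&0&-Q/H^2\end{pmatrix}$. This is the limiting matrix at the upstream endstate $(1,1,0)$ of a hydraulic shock of the inviscid Saint-Venant equations with Froude number $F$ and downstream state $(\nu^{-2},\nu^{-3},0)$; $A_1$ is invertible for $F\neq F_{\text{exist}}$. *)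

theory Defs
  imports "HOL-Analysis.Analysis"
begin

text \<open>Saint-Venant hydraulic shock, limiting matrices at the upstream endstate.
  Parameters: nu (shock parameter, nu > 1), F (Froude number), H, Q (endstate).\<close>

definition sv_s :: "real \<Rightarrow> real" where
  "sv_s nu = (nu^2 + nu + 1) / (nu * (nu + 1))"

definition F_exist :: "real \<Rightarrow> real" where
  "F_exist nu = nu * (nu + 1)"

definition F_2d :: "real \<Rightarrow> real" where
  "F_2d nu = nu * (nu + 1) / sqrt (nu^2 + nu - 1)"

definition sv_A1 :: "real \<Rightarrow> real \<Rightarrow> real \<Rightarrow> real \<Rightarrow> complex^3^3" where
  "sv_A1 nu F H Q = (let s = sv_s nu in
     vector [vector [complex_of_real (- s), 1, 0],
             vector [complex_of_real (H / F^2 - Q^2 / H^2), complex_of_real (2*Q/H - s), 0],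
             vector [0, 0, complex_of_real (Q/H - s)]])"

definition sv_A2 :: "real \<Rightarrow> real \<Rightarrow> real \<Rightarrow> complex^3^3" where
  "sv_A2 F H Q =
     vector [vector [0, 0, 1],
             vector [0, 0, complex_of_real (Q/H)],
             vector [complex_of_real (H / F^2), 0, 0]]"

definition sv_E :: "real \<Rightarrow> real \<Rightarrow> complex^3^3" where
  "sv_E H Q =
     vector [vector [0, 0, 0],
             vector [complex_of_real (2*Q^2/H^3 + 1), complex_of_real (-2*Q/H^2), 0],
             vector [0, 0, complex_of_real (-Q/H^2)]]"

definition G_minf :: "real \<Rightarrow> real \<Rightarrow> complex \<Rightarrow> real \<Rightarrow> complex^3^3" where
  "G_minf nu F lam eta =
     (sv_E 1 1 - mat lam - mat (\<i> * complex_of_real eta) ** sv_A2 F 1 1)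
       ** matrix_inv (sv_A1 nu F 1 1)"

definition disp_root :: "real \<Rightarrow> real \<Rightarrow> real \<Rightarrow> real \<Rightarrow> real \<Rightarrow> complex \<Rightarrow> bool" where
  "disp_root nu F mu k eta lam \<longleftrightarrow>
     det (G_minf nu F lam eta - mat (\<i> * complex_of_real k + complex_of_real mu)) = 0"

end

theory Submission
  imports Defs
begin


lemma Fe_pos: "nu > 1 \<Longrightarrow> F_exist nu > 2"
proof -
  assume "nu > 1"
  then have "nu * (nu+1) > 1 * 2" by (intro mult_strict_mono) auto
  then show ?thesis by (simp add: F_exist_def)
qed

lemma s_eq: "nu > 1 \<Longrightarrow> sv_s nu = 1 + 1 / F_exist nu"
  using Fe_pos[of nu] by (simp add: sv_s_def F_exist_def field_simps power2_eq_square)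

lemma detA1: "nu > 1 \<Longrightarrow> F \<noteq> 0 \<Longrightarrow> det (sv_A1 nu F 1 1) = complex_of_real (-(1/F_exist nu) * ((1/F_exist nu)^2 - 1/F^2))"
  using Fe_pos[of nu]
  apply (simp add: sv_A1_def det_3 Let_def s_eq)
  apply (simp add: field_simps power2_eq_square)
  done

lemma rdist_sub: "((X::'a::ring_1^'n^'m) - Y) ** Z = X ** Z - Y ** Z"
  by (simp add: vec_eq_iff matrix_matrix_mult_def sum_subtractf algebra_simps)

lemma detN: "nu > 1 \<Longrightarrow> F \<noteq> 0 \<Longrightarrow> det (sv_E 1 1 - mat lam - mat (\<i> * complex_of_real eta) ** sv_A2 F 1 1 - mat c ** sv_A1 nu F 1 1)
  = - ((lam - c / F_exist nu + 1)^3 + (c - c^2/F^2 - 1 + eta^2/F^2) * (lam - c / F_exist nu + 1) + eta^2/F^2)"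
  using Fe_pos[of nu]
  apply (simp add: sv_A1_def sv_A2_def sv_E_def det_3 Let_def s_eq matrix_matrix_mult_def sum_3 mat_def)
  apply (simp add: field_simps power2_eq_square power3_eq_cube)
  done



lemma root_parts:
  fixes w :: complex and Pr Pi q :: real
  assumes "w^3 + Complex Pr Pi * w + complex_of_real q = 0"
  shows "Re w^3 - 3*Re w*(Im w)^2 + Pr*Re w - Pi*Im w + q = 0"
    and "3*(Re w)^2*Im w - (Im w)^3 + Pr*Im w + Pi*Re w = 0"
proof -
  have "Re (w^3 + Complex Pr Pi * w + complex_of_real q) = 0"
       "Im (w^3 + Complex Pr Pi * w + complex_of_real q) = 0" using assms by simp_all
  then show "Re w^3 - 3*Re w*(Im w)^2 + Pr*Re w - Pi*Im w + q = 0"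
    and "3*(Re w)^2*Im w - (Im w)^3 + Pr*Im w + Pi*Re w = 0"
    by (simp_all add: power3_eq_cube power2_eq_square algebra_simps)
qed

lemma solve_parts:
  fixes x y Pr Pi q :: real
  assumes e1: "x^3 - 3*x*y^2 + Pr*x - Pi*y + q = 0"
    and e2: "3*x^2*y - y^3 + Pr*y + Pi*x = 0"
    and n: "x^2 + y^2 > 0"
  shows "Pr = y^2 - x^2 - q*x/(x^2+y^2)" and "Pi = -2*x*y + q*y/(x^2+y^2)"
proof -
  have "x * (x^3 - 3*x*y^2 + Pr*x - Pi*y + q) + y * (3*x^2*y - y^3 + Pr*y + Pi*x) = 0"
    using e1 e2 by simp
  then have "Pr * (x^2+y^2) = (y^2 - x^2)*(x^2+y^2) - q*x"
    by (simp add: algebra_simps power2_eq_square power3_eq_cube)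
  then have "Pr = ((y^2 - x^2)*(x^2+y^2) - q*x)/(x^2+y^2)" using n
    by (metis eq_divide_eq less_irrefl)
  then show "Pr = y^2 - x^2 - q*x/(x^2+y^2)" using n
    by (simp add: diff_divide_distrib)
  have "y * (x^3 - 3*x*y^2 + Pr*x - Pi*y + q) - x * (3*x^2*y - y^3 + Pr*y + Pi*x) = 0"
    using e1 e2 by simp
  then have "Pi * (x^2+y^2) = -2*x*y*(x^2+y^2) + q*y"
    by (simp add: algebra_simps power2_eq_square power3_eq_cube)
  then have "Pi = (-2*x*y*(x^2+y^2) + q*y)/(x^2+y^2)" using n
    by (metis eq_divide_eq less_irrefl)
  then show "Pi = -2*x*y + q*y/(x^2+y^2)" using n
    by (simp add: diff_divide_distrib)
qed

lemma quart_bound: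
  fixes f beta b rho X t :: real
  assumes f: "f > 0" and beta: "beta > 0" and X: "0 \<le> X" and rho: "X \<le> rho"
    and t: "t = b^2/(4*f*beta)" "t < 1"
  shows "f^2*(beta*rho+X)^2 \<ge> f*b^2*rho*X + (1-t)*f^2*beta^2*rho^2"
proof -
  have t0: "0 \<le> t" using t f beta by simp
  have r0: "0 \<le> rho" using X rho by simp
  have h1: "(beta*rho+X)^2 \<ge> 4*beta*rho*X"
  proof -
    have "(beta*rho+X)^2 - 4*beta*rho*X = (beta*rho - X)^2" by (simp add: power2_eq_square algebra_simps)
    then show ?thesis by (smt (verit) zero_le_power2)
  qed
  have h2: "(beta*rho+X)^2 \<ge> (beta*rho)^2"
    using beta r0 X by (intro power_mono) auto
  have "f^2*(beta*rho+X)^2 = t*(f^2*(beta*rho+X)^2) + (1-t)*(f^2*(beta*rho+X)^2)"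
    by (simp add: algebra_simps)
  also have "\<dots> \<ge> t*(f^2*(4*beta*rho*X)) + (1-t)*(f^2*(beta*rho)^2)"
    using h1 h2 t0 t(2) f
    by (intro add_mono mult_left_mono) auto
  also have "t*(f^2*(4*beta*rho*X)) = f*b^2*rho*X"
    using t f beta by (simp add: field_simps power2_eq_square)
  finally show ?thesis by (simp add: power2_eq_square algebra_simps)
qed

lemma stab_core:
  fixes f beta gam b C0 :: real
  assumes f: "f > 0" and beta: "beta > 0" and bg: "beta = 2*gam - 1" and bb: "b^2 < 4*f*beta"
  shows "\<exists>R>0. \<forall>k eta. R \<le> k^2 + eta^2 \<longrightarrow>
     (\<forall>w. w^3 + Complex (C0 + f*(k^2+eta^2)) (k*b) * w + complex_of_real (f*eta^2) = 0 \<longrightarrow> Re w < gam)"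
proof -
  define t where "t = b^2/(4*f*beta)"
  have t1: "t < 1" using bb f beta by (simp add: t_def)
  define eps where "eps = (1-t)*f^2*beta^2"
  have eps: "eps > 0" using t1 f beta by (simp add: eps_def)
  define D where "D = 2*gam*C0"
  define K where "K = 2*\<bar>D\<bar>*f*(beta+1) + \<bar>C0\<bar>*b^2"
  have K0: "K \<ge> 0" using f beta by (simp add: K_def)
  define R where "R = max (max ((\<bar>C0\<bar>+1)/f) ((\<bar>D\<bar>+1)/(f*beta))) ((K+1)/eps)"
  have R0: "R > 0" using eps K0 by (simp add: R_def less_max_iff_disj)
  show ?thesis
  proof (intro exI[of _ R] conjI allI impI R0)
    fix k eta :: real and w :: complex
    assume hR: "R \<le> k^2 + eta^2"
      and root: "w^3 + Complex (C0 + f*(k^2+eta^2)) (k*b) * w + complex_of_real (f*eta^2) = 0"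
    define X where "X = k^2"
    define rho where "rho = k^2 + eta^2"
    define Pr where "Pr = C0 + f*rho"
    define Pi where "Pi = k*b"
    define q where "q = f*eta^2"
    define S where "S = f*(beta*rho + X) + D"
    have X0: "0 \<le> X" and Xr: "X \<le> rho" by (simp_all add: X_def rho_def)
    have q0: "q \<ge> 0" using f by (simp add: q_def)
    have r1: "rho \<ge> (\<bar>C0\<bar>+1)/f" and r2: "rho \<ge> (\<bar>D\<bar>+1)/(f*beta)" and r3: "rho \<ge> (K+1)/eps"
      using hR by (simp_all add: rho_def R_def)
    have Pr_pos: "Pr > 0"
    proof -
      have "f*rho \<ge> \<bar>C0\<bar>+1" using r1 f by (simp add: field_simps)
      then show ?thesis unfolding Pr_def by linarith
    qed
    have S_pos: "S > 0"
    proof -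
      have "f*beta*rho \<ge> \<bar>D\<bar>+1" using r2 f beta by (simp add: field_simps)
      moreover have "f*X \<ge> 0" using f X0 by simp
      ultimately show ?thesis unfolding S_def by (simp add: algebra_simps)
    qed
    have S_eq: "S = 2*gam*Pr - q"
      by (simp add: S_def Pr_def q_def D_def bg rho_def X_def algebra_simps)
    have key: "S^2 > Pr * (X * b^2)"
    proof -
      have A: "f^2*(beta*rho+X)^2 \<ge> f*b^2*rho*X + eps*rho^2"
        using quart_bound[OF f beta X0 Xr t_def t1] by (simp add: eps_def)
      have B: "2*D*f*(beta*rho+X) \<ge> -(2*\<bar>D\<bar>*f*(beta+1)*rho)"
      proof -
        have "\<bar>2*D*f*(beta*rho+X)\<bar> = 2*\<bar>D\<bar>*f*(beta*rho+X)" using f beta X0 Xr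
          by (simp add: abs_mult)
        also have "\<dots> \<le> 2*\<bar>D\<bar>*f*((beta+1)*rho)" using f beta X0 Xr
          by (intro mult_left_mono) (auto simp: algebra_simps)
        finally show ?thesis by (simp add: algebra_simps)
      qed
      have C: "C0*X*b^2 \<le> \<bar>C0\<bar>*b^2*rho"
      proof -
        have "C0*X*b^2 \<le> \<bar>C0\<bar>*X*b^2" by (intro mult_right_mono) (auto simp: X0)
        also have "\<dots> = X*(\<bar>C0\<bar>*b^2)" by simp
        also have "\<dots> \<le> rho*(\<bar>C0\<bar>*b^2)" using Xr
          by (intro mult_right_mono) auto
        also have "\<dots> = \<bar>C0\<bar>*b^2*rho" by simp
        finally show ?thesis .
      qed
      have E: "rho*(eps*rho - K) > 0"
      proof -
        have "eps*rho \<ge> K+1" using r3 eps by (simp add: field_simps)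
        moreover have "rho > 0" using r3 eps K0
          by (smt (verit) divide_pos_pos)
        ultimately show ?thesis by simp
      qed
      have "S^2 - Pr*(X*b^2) = f^2*(beta*rho+X)^2 - f*b^2*rho*X + 2*D*f*(beta*rho+X) + D^2 - C0*X*b^2"
        by (simp add: S_def Pr_def power2_eq_square algebra_simps)
      also have "\<dots> \<ge> eps*rho^2 - 2*\<bar>D\<bar>*f*(beta+1)*rho - \<bar>C0\<bar>*b^2*rho"
        using A B C by (smt (verit) zero_le_power2)
      also have "eps*rho^2 - 2*\<bar>D\<bar>*f*(beta+1)*rho - \<bar>C0\<bar>*b^2*rho = rho*(eps*rho - K)"
        by (simp add: K_def power2_eq_square algebra_simps)
      finally show ?thesis using E by linarith
    qed
    show "Re w < gam"
    proof (rule ccontr)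
      assume "\<not> Re w < gam"
      then have xg: "Re w \<ge> gam" by simp
      define x where "x = Re w"
      define y where "y = Im w"
      have gam_pos: "gam > 1/2" using beta bg by simp
      have x_pos: "x > 0" using xg gam_pos by (simp add: x_def)
      have root': "w^3 + Complex Pr Pi * w + complex_of_real q = 0"
        using root by (simp add: Pr_def Pi_def q_def rho_def)
      note rp = root_parts[OF root', folded x_def y_def]
      define n where "n = x^2 + y^2"
      have n_pos: "n > 0" using x_pos by (simp add: n_def add_pos_nonneg)
      note sp = solve_parts[OF rp n_pos[unfolded n_def], folded n_def]
      define u where "u = q/n"
      have u0: "u \<ge> 0" using q0 n_pos by (simp add: u_def)
      have Pr_eq: "Pr = y^2 - x^2 - x*u" using sp(1) by (simp add: u_def algebra_simps)
      have Pi_eq: "Pi = -(y*(2*x-u))" using sp(2) by (simp add: u_def algebra_simps)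
      have y2: "y^2 \<ge> Pr" using Pr_eq x_pos u0 by (smt (verit) mult_nonneg_nonneg zero_le_power2)
      have nPr: "n \<ge> Pr" using y2 by (simp add: n_def) (smt (verit) zero_le_power2)
      have uq: "u \<le> q/Pr" unfolding u_def using q0 Pr_pos nPr by (intro divide_left_mono) auto
      have SPr: "S/Pr = 2*gam - q/Pr" using Pr_pos by (simp add: S_eq field_simps)
      have d1: "2*x - u \<ge> S/Pr" using SPr uq xg by (simp add: x_def)
      have d0: "S/Pr > 0" using S_pos Pr_pos by simp
      have "Pi^2 = y^2 * (2*x-u)^2" by (simp add: Pi_eq power_mult_distrib)
      also have "\<dots> \<ge> Pr * (S/Pr)^2"
        using y2 d1 d0 Pr_pos by (intro mult_mono power_mono) auto
      also have "Pr * (S/Pr)^2 = S^2/Pr" using Pr_pos by (simp add: power2_eq_square)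
      finally have "Pi^2 * Pr \<ge> S^2" using Pr_pos by (simp add: field_simps)
      moreover have "Pi^2 = X*b^2" by (simp add: Pi_def X_def power_mult_distrib)
      ultimately show False using key by (simp add: algebra_simps)
    qed
  qed
qed



lemma root_construct:
  fixes x y u k eta f b C0 :: real
  assumes h1: "k*b = -(y*(2*x-u))" and h2: "f*eta^2 = u*(x^2+y^2)"
    and h3: "C0 + f*k^2 + u*(x^2+y^2) = y^2 - x^2 - x*u"
  shows "(Complex x y)^3 + Complex (C0 + f*(k^2+eta^2)) (k*b) * Complex x y + complex_of_real (f*eta^2) = 0"
proof -
  have Pr: "C0 + f*(k^2+eta^2) = y^2 - x^2 - x*u" using h2 h3 by (simp add: algebra_simps)
  show ?thesis
    unfolding Pr h1 h2
    by (simp add: complex_eq_iff power3_eq_cube power2_eq_square algebra_simps)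
qed

lemma instab_generic:
  fixes a c u gam C0 b f R :: real
  assumes a: "a > 0" and c: "c > 0" "c \<le> 1" and u: "u = 1 - c^2" and f: "f > 0"
    and ab: "f / b^2 = 1 / a^2" and b: "b \<noteq> 0"
    and xs: "gam < (u + a*c)/2"
    and N: "(1+u)*((u+a*c)/2)^2 + u*((u+a*c)/2) + C0 > 0"
  shows "\<exists>k eta. R \<le> k^2+eta^2 \<and> (\<exists>w. w^3 + Complex (C0 + f*(k^2+eta^2)) (k*b) * w
            + complex_of_real (f*eta^2) = 0 \<and> Re w > gam)"
proof -
  define xs where "xs = (u + a*c)/2"
  define Dx where "Dx = (\<lambda>x::real. c^2 - (2*x-u)^2/a^2)"
  define Nx where "Nx = (\<lambda>x::real. (1+u)*x^2 + u*x + C0)"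
  have u0: "u \<ge> 0" using c u by (simp add: power_le_one)
  have ac: "a*c > 0" using a c by simp
  define m where "m = max gam (u/2)"
  have m1: "gam \<le> m" and m2: "u/2 \<le> m" by (simp_all add: m_def)
  define x1 where "x1 = (m + xs)/2"
  have mx: "m < xs" using xs ac by (simp add: xs_def m_def)
  have x1g: "x1 > gam" using mx m1 unfolding x1_def by argo
  have x1xs: "x1 \<le> xs" using mx unfolding x1_def by argo
  have x1a: "2*x1 - u \<ge> a*c/2" using m2 unfolding x1_def xs_def by argo
  have x1b: "2*x1 - u < a*c" using mx unfolding x1_def xs_def by argo
  have Dx1: "Dx x1 > 0"
  proof -
    have "(2*x1-u)^2 < (a*c)^2" using x1a x1b ac by (intro power_strict_mono) auto
    then have "(2*x1-u)^2/a^2 < c^2" using a by (simp add: divide_less_eq power_mult_distrib mult.commute)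
    then show ?thesis by (simp add: Dx_def)
  qed
  have Dxs: "Dx xs = 0"
  proof -
    have "2*xs - u = a*c" unfolding xs_def by argo
    then show ?thesis using a by (simp add: Dx_def power_mult_distrib)
  qed
  have Nxs: "Nx xs > 0" using N by (simp add: Nx_def xs_def)
  define Y where "Y = max (max R 0 * 4 * b^2 / (a*c)^2) ((\<bar>Nx x1\<bar>+1)/Dx x1)"
  have Y0: "Y \<ge> 0" by (simp add: Y_def le_max_iff_disj)
  have YR: "Y \<ge> max R 0 * 4 * b^2 / (a*c)^2" by (simp add: Y_def)
  have YD: "Y * Dx x1 \<ge> \<bar>Nx x1\<bar> + 1"
  proof -
    have "(\<bar>Nx x1\<bar>+1)/Dx x1 \<le> Y" by (simp add: Y_def)
    then show ?thesis using Dx1 by (simp add: pos_divide_le_eq)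
  qed
  define h where "h = (\<lambda>x. Y * Dx x - Nx x)"
  have hx1: "h x1 \<ge> 0" using YD by (simp add: h_def)
  have hxs: "h xs \<le> 0" using Nxs Dxs by (simp add: h_def)
  have cont: "continuous_on {x1..xs} h"
    unfolding h_def Dx_def Nx_def using a by (intro continuous_intros) auto
  obtain x where x: "x1 \<le> x" "x \<le> xs" "h x = 0"
    using IVT2'[of h xs 0 x1, OF hxs hx1 x1xs cont] by blast
  define y where "y = sqrt Y"
  have yY: "y^2 = Y" using Y0 by (simp add: y_def)
  define k where "k = -(y*(2*x-u))/b"
  define eta where "eta = sqrt (u*(x^2+Y)/f)"
  have e1: "k*b = -(y*(2*x-u))" using b by (simp add: k_def)
  have e2: "f*eta^2 = u*(x^2+y^2)"
  proof -
    have "u*(x^2+Y)/f \<ge> 0" using u0 f Y0 by simp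
    then show ?thesis using f by (simp add: eta_def yY)
  qed
  have fk: "f*k^2 = Y*(2*x-u)^2/a^2"
  proof -
    have "f*k^2 = (f/b^2) * (Y*(2*x-u)^2)" using b
      by (simp add: k_def power_divide power_mult_distrib yY)
    also have "\<dots> = Y*(2*x-u)^2/a^2" by (simp add: ab)
    finally show ?thesis .
  qed
  have hx: "Y * (c^2 - (2*x-u)^2/a^2) = (1+u)*x^2 + u*x + C0"
    using x(3) by (simp add: h_def Dx_def Nx_def)
  have e3: "C0 + f*k^2 + u*(x^2+y^2) = y^2 - x^2 - x*u"
  proof -
    have c2: "c^2 = 1 - u" using u by simp
    have "f*k^2 = Y*c^2 - ((1+u)*x^2 + u*x + C0)" using fk hx by (simp add: right_diff_distrib)
    then have fk2: "f*k^2 = Y*(1-u) - ((1+u)*x^2 + u*x + C0)" by (simp only: c2)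
    show ?thesis unfolding fk2 yY by (simp add: algebra_simps)
  qed
  have root: "(Complex x y)^3 + Complex (C0 + f*(k^2+eta^2)) (k*b) * Complex x y + complex_of_real (f*eta^2) = 0"
    by (rule root_construct[OF e1 e2 e3])
  have big: "R \<le> k^2 + eta^2"
  proof -
    have d: "2*x - u \<ge> a*c/2" using x1a x(1) by simp
    have "k^2 = Y*(2*x-u)^2/b^2" using b by (simp add: k_def power_divide power_mult_distrib yY)
    also have "\<dots> \<ge> (max R 0 * 4 * b^2 / (a*c)^2) * (a*c/2)^2 / b^2"
      using YR d ac Y0 by (intro divide_right_mono mult_mono power_mono) auto
    also have "(max R 0 * 4 * b^2 / (a*c)^2) * (a*c/2)^2 / b^2 = max R 0"
      using b a c by (simp add: power_divide field_simps)
    finally have "k^2 \<ge> R" by linarith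
    then show ?thesis by (smt (verit) zero_le_power2)
  qed
  show ?thesis
    using big root x(1) x1g by (intro exI[of _ k] exI[of _ eta] conjI exI[of _ "Complex x y"]) auto
qed

lemma instab_core:
  fixes F mu gam b C0 R :: real
  assumes F: "F > 2" and mu: "mu \<ge> 0" and g1: "gam \<le> 1"
    and b_def: "b = 1 - 2*mu/F^2" and C0_def: "C0 = mu - mu^2/F^2 - 1"
    and inst: "(F^2/2 - mu)^2 > F^2*(2*gam - 1)"
  shows "\<exists>k eta. R \<le> k^2+eta^2 \<and> (\<exists>w. w^3 + Complex (C0 + (1/F^2)*(k^2+eta^2)) (k*b) * w
            + complex_of_real ((1/F^2)*eta^2) = 0 \<and> Re w > gam)"
proof -
  define f where "f = 1/F^2"
  have f: "f > 0" using F by (simp add: f_def)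
  have F0: "F \<noteq> 0" using F by simp
  have Fb: "F^2/2 - mu = F^2*b/2" using F0 by (simp add: b_def field_simps)
  show ?thesis
  proof (cases "b = 0")
    case True
    have mu2: "mu = F^2/2" using Fb True by simp
    have g2: "gam < 1/2"
    proof -
      have "F^2*(2*gam - 1) < 0" using inst Fb True by simp
      then have "2*gam - 1 < 0" using F by (simp add: mult_less_0_iff)
      then show ?thesis by simp
    qed
    have C0v: "C0 = F^2/4 - 1" using F0 by (simp add: C0_def mu2 power2_eq_square field_simps)
    have C0p: "C0 > 0"
    proof -
      have "F^2 > 2^2" using F by (intro power_strict_mono) auto
      then show ?thesis by (simp add: C0v)
    qed
    define m where "m = max gam 0"
    have m1: "gam \<le> m" "0 \<le> m" "m < 1/2" using g2 by (simp_all add: m_def)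
    define x where "x = (m + 1/2)/2"
    have x1: "x > gam" "x \<ge> 0" "x < 1/2" using m1 unfolding x_def by argo+
    define u where "u = 2*x"
    define k where "k = sqrt (max R 0)"
    have k2: "k^2 = max R 0" by (simp add: k_def)
    define Y where "Y = (C0 + f*k^2 + 3*x^2 + 2*x^3)/(1-2*x)"
    have Y0: "Y \<ge> 0" using C0p f x1 by (simp add: Y_def)
    have YE: "Y*(1-2*x) = C0 + f*k^2 + 3*x^2 + 2*x^3" using x1 by (simp add: Y_def)
    define y where "y = sqrt Y"
    have yY: "y^2 = Y" using Y0 by (simp add: y_def)
    define eta where "eta = sqrt (u*(x^2+Y)/f)"
    have e1: "k*b = -(y*(2*x-u))" using True by (simp add: u_def)
    have e2: "f*eta^2 = u*(x^2+y^2)"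
    proof -
      have "u*(x^2+Y)/f \<ge> 0" using x1 f Y0 by (simp add: u_def)
      then show ?thesis using f by (simp add: eta_def yY)
    qed
    have e3: "C0 + f*k^2 + u*(x^2+y^2) = y^2 - x^2 - x*u"
      using YE unfolding yY u_def by (simp add: algebra_simps power2_eq_square power3_eq_cube)
    have root: "(Complex x y)^3 + Complex (C0 + f*(k^2+eta^2)) (k*b) * Complex x y + complex_of_real (f*eta^2) = 0"
      by (rule root_construct[OF e1 e2 e3])
    have big: "R \<le> k^2 + eta^2" using k2 by (smt (verit) zero_le_power2)
    show ?thesis
      using big root x1 unfolding f_def
      by (intro exI[of _ k] exI[of _ eta] conjI exI[of _ "Complex x y"]) auto
  next
    case False
    define a where "a = F*\<bar>b\<bar>"
    have a0: "a > 0" using F False by (simp add: a_def)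
    have a2: "a^2 = F^2*b^2" by (simp add: a_def power_mult_distrib)
    have ab: "f / b^2 = 1 / a^2" by (simp add: f_def a2)
    have C0a: "C0 = (F^2 - a^2)/4 - 1" using F0 unfolding a2 C0_def b_def
      by (simp add: power2_eq_square field_simps)
    have insta: "a^2/4 > 2*gam - 1"
    proof -
      have "(F^2/2 - mu)^2 = F^2*(a^2/4)" unfolding Fb a2 by (simp add: power2_eq_square)
      then have "F^2*(2*gam-1) < F^2*(a^2/4)" using inst by simp
      then show ?thesis using F by simp
    qed
    have F4: "F^2 > 4"
    proof -
      have "F^2 > 2^2" using F by (intro power_strict_mono) auto
      then show ?thesis by simp
    qed
    show ?thesis
    proof (cases "a \<le> 2")
      case True
      define c where "c = a/2"
      define u where "u = 1 - c^2"
      define vv where "vv = a^2/4"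
      have v1: "vv \<le> 1" "vv \<ge> 0"
      proof -
        have "a^2 \<le> 2^2" using True a0 by (intro power_mono) auto
        then show "vv \<le> 1" by (simp add: vv_def)
      qed (simp add: vv_def)
      have c: "c > 0" "c \<le> 1" using a0 True by (simp_all add: c_def)
      have xsv: "(u + a*c)/2 = (1+vv)/2" by (simp add: u_def c_def vv_def power2_eq_square field_simps)
      have xs: "gam < (u + a*c)/2" using insta unfolding xsv vv_def by simp
      have uv: "u = 1 - vv" by (simp add: u_def c_def vv_def power2_eq_square)
      have Nv: "(1+u)*((u+a*c)/2)^2 + u*((u+a*c)/2) + C0 = (F^2 - vv - 2* vv^2 - vv^3)/4"
        unfolding xsv unfolding uv C0a by (simp add: vv_def power2_eq_square power3_eq_cube field_simps)
      have "vv + 2* vv^2 + vv^3 \<le> 4"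
      proof -
        have "vv^2 \<le> 1" "vv^3 \<le> 1" using v1 by (simp_all add: power_le_one)
        then show ?thesis using v1 by simp
      qed
      then have N: "(1+u)*((u+a*c)/2)^2 + u*((u+a*c)/2) + C0 > 0" unfolding Nv using F4 by simp
      from instab_generic[OF a0 c u_def f ab False xs N, of R] show ?thesis by (simp add: f_def)
    next
      case False
      define c :: real where "c = 1"
      define u :: real where "u = 1 - c^2"
      have c: "c > 0" "c \<le> 1" by (simp_all add: c_def)
      have u0: "u = 0" by (simp add: u_def c_def)
      have xs: "gam < (u + a*c)/2" using g1 False by (simp add: u0 c_def)
      have N: "(1+u)*((u+a*c)/2)^2 + u*((u+a*c)/2) + C0 > 0"
        using F4 by (simp add: u0 c_def C0a power2_eq_square field_simps)
      from instab_generic[OF a0 c u_def f ab \<open>b \<noteq> 0\<close> xs N, of R] show ?thesis by (simp add: f_def)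
    qed
  qed
qed


lemma disp_iff:
  assumes nu: "nu > 1" and F: "F > 0" and FE: "F \<noteq> F_exist nu"
  shows "disp_root nu F mu k eta lam \<longleftrightarrow>
    (lam - (\<i> * complex_of_real k + complex_of_real mu) / complex_of_real (F_exist nu) + 1)^3
    + Complex (mu - mu^2/F^2 - 1 + (1/F^2)*(k^2+eta^2)) (k*(1 - 2*mu/F^2))
       * (lam - (\<i> * complex_of_real k + complex_of_real mu) / complex_of_real (F_exist nu) + 1)
    + complex_of_real ((1/F^2)*eta^2) = 0"
proof -
  define c where "c = \<i> * complex_of_real k + complex_of_real mu"
  define A where "A = sv_A1 nu F 1 1"
  define Ai where "Ai = matrix_inv A"
  define X where "X = sv_E 1 1 - mat lam - mat (\<i> * complex_of_real eta) ** sv_A2 F 1 1"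
  have Fe: "F_exist nu > 2" using Fe_pos[OF nu] .
  have dA: "det A \<noteq> 0"
  proof -
    define E where "E = F_exist nu"
    have E0: "E > 0" using Fe by (simp add: E_def)
    have FE2: "F^2 \<noteq> E^2"
    proof
      assume "F^2 = E^2"
      then have "F = E" using F E0 by (simp add: power2_eq_iff_nonneg)
      then show False using FE by (simp add: E_def)
    qed
    have eq: "(1/E)^2 - 1/F^2 = (F^2 - E^2)/(E^2*F^2)" using F E0 by (simp add: field_simps)
    have r: "-(1/E)*((1/E)^2 - 1/F^2) \<noteq> 0" unfolding eq using FE2 F E0 by simp
    have h1: "complex_of_real (-(1/E)*((1/E)^2 - 1/F^2)) \<noteq> 0"
      by (subst of_real_eq_0_iff) (rule r)
    have h2: "det A = complex_of_real (-(1/E)*((1/E)^2 - 1/F^2))"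
      unfolding A_def E_def using F by (intro detA1[OF nu]) simp
    show ?thesis unfolding h2 by (rule h1)
  qed
  then have inv: "invertible A" by (simp add: invertible_det_nz)
  have AAi: "A ** Ai = mat 1"
  proof -
    have "\<exists>A'. A ** A' = mat 1 \<and> A' ** A = mat 1" using inv by (simp add: invertible_def)
    then have "A ** Ai = mat 1 \<and> Ai ** A = mat 1" unfolding Ai_def matrix_inv_def by (rule someI_ex)
    then show ?thesis by simp
  qed
  have dAi: "det Ai \<noteq> 0"
  proof -
    have "det A * det Ai = 1" using AAi by (metis det_I det_mul)
    then show ?thesis by auto
  qed
  have "G_minf nu F lam eta - mat c = (X - mat c ** A) ** Ai"
  proof -
    have "mat c = mat c ** (A ** Ai)" by (simp add: AAi)
    also have "\<dots> = (mat c ** A) ** Ai" by (simp add: matrix_mul_assoc)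
    finally have mc: "(mat c ** A) ** Ai = mat c" by (rule sym)
    have G: "G_minf nu F lam eta = X ** Ai" by (simp add: G_minf_def X_def Ai_def A_def)
    have "G_minf nu F lam eta - mat c = X ** Ai - (mat c ** A) ** Ai" by (simp add: G mc)
    also have "\<dots> = (X - mat c ** A) ** Ai" by (simp add: rdist_sub)
    finally show ?thesis .
  qed
  then have "det (G_minf nu F lam eta - mat c) = det (X - mat c ** A) * det Ai"
    by (simp add: det_mul)
  also have "det (X - mat c ** A) = - ((lam - c / F_exist nu + 1)^3 + (c - c^2/F^2 - 1 + eta^2/F^2) * (lam - c / F_exist nu + 1) + eta^2/F^2)"
    unfolding X_def A_def using detN[OF nu, of F lam eta c] F by simp
  finally have dd: "det (G_minf nu F lam eta - mat c) = - ((lam - c / F_exist nu + 1)^3 + (c - c^2/F^2 - 1 + eta^2/F^2) * (lam - c / F_exist nu + 1) + eta^2/F^2) * det Ai" .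
  have co: "c - c^2/F^2 - 1 + eta^2/F^2 = Complex (mu - mu^2/F^2 - 1 + (1/F^2)*(k^2+eta^2)) (k*(1 - 2*mu/F^2))"
    using F by (simp add: c_def complex_eq_iff power2_eq_square field_simps)
  have co2: "(complex_of_real eta)^2/(complex_of_real F)^2 = complex_of_real ((1/F^2)*eta^2)"
    by simp
  show ?thesis
  proof -
    have "disp_root nu F mu k eta lam \<longleftrightarrow> det (G_minf nu F lam eta - mat c) = 0"
      by (simp add: disp_root_def c_def)
    also have "\<dots> \<longleftrightarrow> (lam - c / F_exist nu + 1)^3 + (c - c^2/F^2 - 1 + eta^2/F^2) * (lam - c / F_exist nu + 1) + eta^2/F^2 = 0"
      using dAi by (simp only: dd mult_eq_0_iff neg_equal_0_iff_equal simp_thms)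
    also have "\<dots> \<longleftrightarrow> (lam - (\<i> * complex_of_real k + complex_of_real mu) / complex_of_real (F_exist nu) + 1)^3
    + Complex (mu - mu^2/F^2 - 1 + (1/F^2)*(k^2+eta^2)) (k*(1 - 2*mu/F^2))
       * (lam - (\<i> * complex_of_real k + complex_of_real mu) / complex_of_real (F_exist nu) + 1)
    + complex_of_real ((1/F^2)*eta^2) = 0"
      unfolding co unfolding c_def by (simp add: divide_inverse mult.commute)
    finally show ?thesis .
  qed
qed

lemma F2d_sq: "nu > 1 \<Longrightarrow> (F_2d nu)^2 = (F_exist nu)^2 / (F_exist nu - 1)"
proof -
  assume nu: "nu > 1"
  have "nu^2 + nu - 1 = F_exist nu - 1" by (simp add: F_exist_def power2_eq_square algebra_simps)
  moreover have "F_exist nu - 1 > 0" using Fe_pos[OF nu] by simp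
  ultimately show ?thesis by (simp add: F_2d_def power_divide F_exist_def)
qed

lemma F2d_pos: "nu > 1 \<Longrightarrow> F_2d nu > 0"
proof -
  assume nu: "nu > 1"
  have "nu*nu > 1*1" using nu by (intro mult_strict_mono) auto
  then have "nu^2 + nu - 1 > 0" using nu by (simp add: power2_eq_square)
  then show ?thesis using nu by (simp add: F_2d_def)
qed

lemma F2d_ge2: "nu > 1 \<Longrightarrow> F_2d nu \<ge> 2"
proof -
  assume nu: "nu > 1"
  define E where "E = F_exist nu"
  have E: "E > 2" using Fe_pos[OF nu] by (simp add: E_def)
  have "(F_2d nu)^2 = E^2/(E-1)" using F2d_sq[OF nu] by (simp add: E_def)
  also have "\<dots> \<ge> 2^2"
  proof -
    have "E^2 - 4*(E-1) = (E-2)^2" by (simp add: power2_eq_square algebra_simps)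
    then have "E^2 \<ge> 4*(E-1)" by (smt (verit) zero_le_power2)
    then show ?thesis using E by (simp add: le_divide_eq)
  qed
  finally have h: "2^2 \<le> (F_2d nu)^2" .
  show ?thesis using F2d_pos[OF nu] power2_le_imp_le[OF h] by simp
qed

lemma F2d_lt: "nu > 1 \<Longrightarrow> F_2d nu < F_exist nu"
proof -
  assume nu: "nu > 1"
  define E where "E = F_exist nu"
  have E: "E > 2" using Fe_pos[OF nu] by (simp add: E_def)
  have "(F_2d nu)^2 = E^2/(E-1)" using F2d_sq[OF nu] by (simp add: E_def)
  also have "\<dots> < E^2" using E by (simp add: divide_less_eq)
  finally show ?thesis using E by (simp add: E_def power_less_imp_less_base)
qed

lemma key_identity:
  fixes F mu E :: real
  assumes "E > 2"
  shows "(F^2/2 - mu)^2 - F^2*(1 - 2*mu/E) = (mu - (F^2/2 - F^2/E))^2 - (F^2 - F^4*(E-1)/E^2)"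
  using assms by (simp add: power2_eq_square field_simps) (simp add: algebra_simps power2_eq_square power4_eq_xxxx)

theorem mainTheorem5:
  fixes nu :: real
  assumes "nu > 1"
  shows
   "(\<forall>F. F_2d nu < F \<and> F < F_exist nu \<longrightarrow>
       (\<forall>mu \<ge> 0. \<forall>R > 0. \<exists>k eta. k^2 + eta^2 \<ge> R \<and>
          (\<exists>lam. disp_root nu F mu k eta lam \<and> Re lam > 0)))
    \<and>
    (\<forall>F. 2 < F \<and> F < F_2d nu \<longrightarrow>
       (let lo = F^2/2 - F^2 / F_exist nu - F / F_2d nu * sqrt ((F_2d nu)^2 - F^2);
            hi = F^2/2 - F^2 / F_exist nu + F / F_2d nu * sqrt ((F_2d nu)^2 - F^2)
        in {lo<..<hi} \<subseteq> {0<..} \<and>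
           (\<forall>mu \<in> {lo<..<hi}. \<exists>R > 0. \<forall>k eta. k^2 + eta^2 \<ge> R \<longrightarrow>
              (\<forall>lam. disp_root nu F mu k eta lam \<longrightarrow> Re lam < 0))))"
proof -
  have nu: "nu > 1" using assms .
  define E where "E = F_exist nu"
  have E: "E > 2" using Fe_pos[OF nu] by (simp add: E_def)
  have d2: "(F_2d nu)^2 = E^2/(E-1)" using F2d_sq[OF nu] by (simp add: E_def)
  have P1: "\<forall>F. F_2d nu < F \<and> F < F_exist nu \<longrightarrow>
       (\<forall>mu \<ge> 0. \<forall>R > 0. \<exists>k eta. k^2 + eta^2 \<ge> R \<and>
          (\<exists>lam. disp_root nu F mu k eta lam \<and> Re lam > 0))"
  proof (intro allI impI)
    fix F mu R :: real
    assume FF: "F_2d nu < F \<and> F < F_exist nu" and mu: "mu \<ge> 0" and R: "R > 0"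
    have F2: "F > 2" using FF F2d_ge2[OF nu] by simp
    have FE: "F \<noteq> F_exist nu" using FF by simp
    have F0: "F > 0" using F2 by simp
    define gam where "gam = 1 - mu/E"
    have g1: "gam \<le> 1" using mu E by (simp add: gam_def)
    have inst: "(F^2/2 - mu)^2 > F^2*(2*gam - 1)"
    proof -
      have "F^2 > (F_2d nu)^2" using FF F2d_pos[OF nu] by (intro power_strict_mono) auto
      then have "F^2 * (E-1) > E^2" using d2 E by (simp add: divide_less_eq)
      then have "F^2*(F^2*(E-1)) > F^2*E^2" using F2 by (intro mult_strict_left_mono) auto
      moreover have "F^2*(F^2*(E-1)) = F^4*(E-1)" by (simp add: power4_eq_xxxx power2_eq_square)
      ultimately have "F^4*(E-1) > F^2*E^2" by simp
      then have "F^4*(E-1)/E^2 > F^2"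
        using E by (simp add: pos_less_divide_eq)
      then have "(F^2/2 - mu)^2 - F^2*(1 - 2*mu/E) > 0"
        unfolding key_identity[OF E] by (smt (verit) zero_le_power2)
      then show ?thesis by (simp add: gam_def algebra_simps)
    qed
    obtain k eta w where kw: "R \<le> k^2+eta^2"
      "w^3 + Complex (mu - mu^2/F^2 - 1 + (1/F^2)*(k^2+eta^2)) (k*(1 - 2*mu/F^2)) * w
            + complex_of_real ((1/F^2)*eta^2) = 0" "Re w > gam"
      using instab_core[OF F2 mu g1 refl refl inst, of R] by blast
    define lam where "lam = w + (\<i> * complex_of_real k + complex_of_real mu) / complex_of_real (F_exist nu) - 1"
    have wl: "lam - (\<i> * complex_of_real k + complex_of_real mu) / complex_of_real (F_exist nu) + 1 = w"
      by (simp add: lam_def)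
    have "disp_root nu F mu k eta lam"
      unfolding disp_iff[OF nu F0 FE] wl by (rule kw(2))
    moreover have "Re lam > 0"
      using kw(3) by (simp add: lam_def gam_def E_def)
    ultimately show "\<exists>k eta. k^2 + eta^2 \<ge> R \<and> (\<exists>lam. disp_root nu F mu k eta lam \<and> Re lam > 0)"
      using kw(1) by blast
  qed
  have P2: "\<forall>F. 2 < F \<and> F < F_2d nu \<longrightarrow>
       (let lo = F^2/2 - F^2 / F_exist nu - F / F_2d nu * sqrt ((F_2d nu)^2 - F^2);
            hi = F^2/2 - F^2 / F_exist nu + F / F_2d nu * sqrt ((F_2d nu)^2 - F^2)
        in {lo<..<hi} \<subseteq> {0<..} \<and>
           (\<forall>mu \<in> {lo<..<hi}. \<exists>R > 0. \<forall>k eta. k^2 + eta^2 \<ge> R \<longrightarrow>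
              (\<forall>lam. disp_root nu F mu k eta lam \<longrightarrow> Re lam < 0)))"
  proof (intro allI impI)
    fix F :: real
    assume FF: "2 < F \<and> F < F_2d nu"
    have F2: "F > 2" using FF by simp
    have FE: "F \<noteq> F_exist nu" using FF F2d_lt[OF nu] by simp
    have F0: "F > 0" using F2 by simp
    define D2 where "D2 = F_2d nu"
    have D2p: "D2 > 0" using F2d_pos[OF nu] by (simp add: D2_def)
    define r where "r = F / D2 * sqrt (D2^2 - F^2)"
    define c0 where "c0 = F^2/2 - F^2/E"
    have FD: "F < D2" using FF by (simp add: D2_def)
    have "F^2 < D2^2" using FD F2 by (intro power_strict_mono) auto
    then have sq0: "sqrt (D2^2 - F^2) \<ge> 0" by simp
    have r0: "r \<ge> 0" unfolding r_def using sq0 F2 D2p by simp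
    have rsq: "r^2 = F^2 - F^4*(E-1)/E^2"
    proof -
      have "D2^2 - F^2 \<ge> 0" using sq0 \<open>F^2 < D2^2\<close> by simp
      then have "r^2 = F^2/D2^2 * (D2^2 - F^2)" by (simp add: r_def power_mult_distrib power_divide)
      also have "\<dots> = F^2 - F^4/D2^2" using D2p by (simp add: field_simps power4_eq_xxxx power2_eq_square)
      also have "F^4/D2^2 = F^4*(E-1)/E^2" using d2 E by (simp add: D2_def)
      finally show ?thesis .
    qed
    have c0r: "r \<le> c0"
    proof -
      have c0p: "c0 \<ge> 0" using E by (simp add: c0_def field_simps mult_right_mono)
      have "c0^2 - r^2 = F^4/4 - F^2" unfolding rsq c0_def using E
        by (simp add: power2_eq_square power4_eq_xxxx field_simps)
      moreover have "F^4/4 - F^2 \<ge> 0"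
      proof -
        have "F^2 \<ge> 2^2" using F2 by (intro power_mono) auto
        then have "F^2 * F^2 \<ge> 4 * F^2" by (intro mult_right_mono) auto
        then show ?thesis by (simp add: power4_eq_xxxx power2_eq_square)
      qed
      ultimately have "r^2 \<le> c0^2" by simp
      then show ?thesis using c0p r0 by (simp add: power2_le_iff_abs_le)
    qed
    have lohi: "F^2/2 - F^2 / F_exist nu - F / F_2d nu * sqrt ((F_2d nu)^2 - F^2) = c0 - r"
       "F^2/2 - F^2 / F_exist nu + F / F_2d nu * sqrt ((F_2d nu)^2 - F^2) = c0 + r"
      by (simp_all add: c0_def r_def E_def D2_def)
    have S1: "{c0 - r<..<c0 + r} \<subseteq> {0<..}" using c0r by auto
    have S2: "\<forall>mu \<in> {c0 - r<..<c0 + r}. \<exists>R > 0. \<forall>k eta. k^2 + eta^2 \<ge> R \<longrightarrow>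
              (\<forall>lam. disp_root nu F mu k eta lam \<longrightarrow> Re lam < 0)"
    proof
      fix mu assume "mu \<in> {c0 - r<..<c0 + r}"
      then have "\<bar>mu - c0\<bar> < r" by auto
      then have "\<bar>mu - c0\<bar>^2 < r^2" by (intro power_strict_mono) auto
      then have mc: "(mu - c0)^2 < r^2" by simp
      define f where "f = 1/F^2"
      define gam where "gam = 1 - mu/E"
      define beta where "beta = 1 - 2*mu/E"
      define b where "b = 1 - 2*mu/F^2"
      define C0 where "C0 = mu - mu^2/F^2 - 1"
      have f: "f > 0" using F2 by (simp add: f_def)
      have sc: "(F^2/2 - mu)^2 < F^2*beta"
      proof -
        have "(F^2/2 - mu)^2 - F^2*(1 - 2*mu/E) < 0"
          unfolding key_identity[OF E] using mc rsq c0_def by simp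
        then show ?thesis by (simp add: beta_def)
      qed
      have beta: "beta > 0"
      proof -
        have "F^2*beta > 0" using sc by (smt (verit) zero_le_power2)
        then show ?thesis using F2 by (simp add: zero_less_mult_iff)
      qed
      have bg: "beta = 2*gam - 1" by (simp add: beta_def gam_def)
      have bb: "b^2 < 4*f*beta"
      proof -
        have Fb: "F^2/2 - mu = F^2*b/2" using F2 by (simp add: b_def field_simps)
        have "(F^2*b/2)^2 < F^2*beta" using sc Fb by simp
        then have "F^2*(F^2*b^2) < F^2*(4*beta)" by (simp add: power_mult_distrib power2_eq_square algebra_simps)
        then have "F^2*b^2 < 4*beta" using mult_less_cancel_left_pos[of "F^2" "F^2*b^2" "4*beta"] F2 by (simp del: mult_less_cancel_left_pos)
        then show ?thesis using F2 by (simp add: f_def field_simps)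
      qed
      obtain R where R: "R > 0" and RR: "\<forall>k eta. R \<le> k^2 + eta^2 \<longrightarrow>
         (\<forall>w. w^3 + Complex (C0 + f*(k^2+eta^2)) (k*b) * w + complex_of_real (f*eta^2) = 0 \<longrightarrow> Re w < gam)"
        using stab_core[OF f beta bg bb, of C0] by blast
      show "\<exists>R > 0. \<forall>k eta. k^2 + eta^2 \<ge> R \<longrightarrow>
              (\<forall>lam. disp_root nu F mu k eta lam \<longrightarrow> Re lam < 0)"
      proof (intro exI[of _ R] conjI allI impI R)
        fix k eta :: real and lam :: complex
        assume kR: "R \<le> k^2 + eta^2" and dr: "disp_root nu F mu k eta lam"
        define w where "w = lam - (\<i> * complex_of_real k + complex_of_real mu) / complex_of_real (F_exist nu) + 1"
        have "w^3 + Complex (C0 + f*(k^2+eta^2)) (k*b) * w + complex_of_real (f*eta^2) = 0"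
          using dr unfolding disp_iff[OF nu F0 FE] by (simp add: w_def C0_def f_def b_def)
        then have "Re w < gam" using RR kR by blast
        then show "Re lam < 0" by (simp add: w_def gam_def E_def)
      qed
    qed
    show "let lo = F^2/2 - F^2 / F_exist nu - F / F_2d nu * sqrt ((F_2d nu)^2 - F^2);
            hi = F^2/2 - F^2 / F_exist nu + F / F_2d nu * sqrt ((F_2d nu)^2 - F^2)
        in {lo<..<hi} \<subseteq> {0<..} \<and>
           (\<forall>mu \<in> {lo<..<hi}. \<exists>R > 0. \<forall>k eta. k^2 + eta^2 \<ge> R \<longrightarrow>
              (\<forall>lam. disp_root nu F mu k eta lam \<longrightarrow> Re lam < 0))"
      unfolding Let_def lohi using S1 S2 by blast
  qed
  show ?thesis using P1 P2 by blast
qed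

end
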